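(* Let $X$ be a Tychonoff space. If player II has a winning strategy in the game $\mathsf{G}_1(\mathcal{O}, \mathcal{O})$ played on $X$, then player II has a winning strategy in the game $\mathsf{G}_1(\Omega_{\mathrm{o}}, \Omega_{\mathrm{o}})$ played on $C_p(X)$, and $C_p(X)$ is productively countably tight.
   Context: $\mathcal{O}$ is the collection of all open covers of $X$. For families $\mathcal{A},\mathcal{B}$, the game $\mathsf{G}_1(\mathcal{A},\mathcal{B})$ is played in innings $n \in \omega$: player I chooses $A_n \in \mathcal{A}$, then player II chooses $a_n \in A_n$; II wins iff $\{a_n : n \in \omega\} \in \mathcal{B}$. $C_p(X)$ is the space of continuous real-valued functions on $X$ with the topology of pointwise convergence, $\mathrm{o}$ is the constant zero function, and $\Omega_{\mathrm{o}}$ is the collection of all sets $A \subset C_p(X)$ with $\mathrm{o} \notin A$ and $\mathrm{o} \in \overline{A}$. A space $Z$ is productively countably tight if $Z \times Y$ is countably tight for every countably tight space $Y$ (countably tight: whenever $y \in \overline{A}$ there is a countable $B \subset A$ with $y \in \overline{B}$). *)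

theory Defs
  imports "HOL-Analysis.Analysis"
begin

definition tychonoff_space :: "'a topology \<Rightarrow> bool" where
  "tychonoff_space X \<longleftrightarrow> t1_space X \<and> completely_regular_space X"

definition open_covers :: "'a topology \<Rightarrow> 'a set set set" where
  "open_covers X = {\<U>. (\<forall>U\<in>\<U>. openin X U) \<and> \<Union>\<U> = topspace X}"

text \<open>Player II has a winning strategy in G_1(A,B). A strategy for II maps the
  finite list of I's moves so far (A_0,...,A_n) to II's answer a_n.\<close>
definition II_wins_G1 :: "'x set set \<Rightarrow> 'x set set \<Rightarrow> bool" where
  "II_wins_G1 \<A> \<B> \<longleftrightarrow>
     (\<exists>\<sigma> :: 'x set list \<Rightarrow> 'x.
        \<forall>F :: nat \<Rightarrow> 'x set. (\<forall>n. F n \<in> \<A>) \<longrightarrow>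
          (\<forall>n. \<sigma> (map F [0..<Suc n]) \<in> F n) \<and>
          range (\<lambda>n. \<sigma> (map F [0..<Suc n])) \<in> \<B>)"

text \<open>C_p(X): continuous real functions on X (extended by undefined outside
  topspace X), with the topology of pointwise convergence, i.e. the subspace
  topology inherited from the product topology R^X.\<close>
definition Cp :: "'a topology \<Rightarrow> ('a \<Rightarrow> real) topology" where
  "Cp X = subtopology (product_topology (\<lambda>_. euclideanreal) (topspace X))
            {f. continuous_map X euclideanreal f \<and> f \<in> extensional (topspace X)}"

definition zero_fun :: "'a topology \<Rightarrow> 'a \<Rightarrow> real" where
  "zero_fun X = restrict (\<lambda>_. 0) (topspace X)"

definition Omega_o :: "'a topology \<Rightarrow> ('a \<Rightarrow> real) set set" where
  "Omega_o X = {A. A \<subseteq> topspace (Cp X) \<and> zero_fun X \<notin> A \<and> zero_fun X \<in> (Cp X) closure_of A}"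

definition countably_tight :: "'a topology \<Rightarrow> bool" where
  "countably_tight Y \<longleftrightarrow>
     (\<forall>A y. A \<subseteq> topspace Y \<and> y \<in> Y closure_of A \<longrightarrow>
        (\<exists>B\<subseteq>A. countable B \<and> y \<in> Y closure_of B))"

end

theory Submission
  imports Defs
begin

lemma topspace_Cp: "topspace (Cp X) = {f. continuous_map X euclideanreal f \<and> f \<in> extensional (topspace X)}"
  unfolding Cp_def topspace_subtopology topspace_product_topology
  by (auto simp: PiE_def extensional_def Pi_def)

lemma Cp_proj: "x \<in> topspace X \<Longrightarrow> continuous_map (Cp X) euclideanreal (\<lambda>f. f x)"
  unfolding Cp_def
  by (rule continuous_map_from_subtopology, rule continuous_map_product_projection[where X="\<lambda>_. euclideanreal", simplified]) 

lemma Cp_nbhd_open: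
  assumes g: "g \<in> topspace (Cp X)" and F: "finite F" and e: "e > 0"
  shows "openin (Cp X) {f\<in>topspace (Cp X). \<forall>x\<in>F. \<bar>f x - g x\<bar> < e}"
proof -
  let ?I = "F \<inter> topspace X"
  have o: "openin (Cp X) {f\<in>topspace (Cp X). f x \<in> {t. \<bar>t - g x\<bar> < e}}" if "x \<in> ?I" for x
    apply (rule openin_continuous_map_preimage[OF Cp_proj])
    using that apply blast
  proof -
    have "{t. \<bar>t - g x\<bar> < e} = ball (g x) e" by (auto simp: ball_def dist_real_def abs_minus_commute)
    then show "openin euclideanreal {t. \<bar>t - g x\<bar> < e}" by simp
  qed
  have "openin (Cp X) ((\<Inter>x\<in>?I. {f\<in>topspace (Cp X). f x \<in> {t. \<bar>t - g x\<bar> < e}}) \<inter> topspace (Cp X))"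
    using F o by (intro openin_INT) auto
  moreover have "(\<Inter>x\<in>?I. {f\<in>topspace (Cp X). f x \<in> {t. \<bar>t - g x\<bar> < e}}) \<inter> topspace (Cp X)
     = {f\<in>topspace (Cp X). \<forall>x\<in>F. \<bar>f x - g x\<bar> < e}"
  proof -
    have fg: "f x = g x" if "f \<in> topspace (Cp X)" "x \<notin> topspace X" for f x
      using that g by (simp add: topspace_Cp extensional_def)
    have "(\<forall>x\<in>?I. \<bar>f x - g x\<bar> < e) \<longleftrightarrow> (\<forall>x\<in>F. \<bar>f x - g x\<bar> < e)" if "f \<in> topspace (Cp X)" for f
    proof
      assume a: "\<forall>x\<in>?I. \<bar>f x - g x\<bar> < e"
      show "\<forall>x\<in>F. \<bar>f x - g x\<bar> < e"
      proof
        fix x assume "x \<in> F"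
        then show "\<bar>f x - g x\<bar> < e" using a fg[OF that, of x] e by (cases "x \<in> topspace X") auto
      qed
    qed auto
    then show ?thesis by auto
  qed
  ultimately show ?thesis by simp
qed

lemma Cp_nbhd_basis:
  assumes T: "openin (Cp X) T" and g: "g \<in> T"
  shows "\<exists>G m. finite G \<and> G \<subseteq> topspace X \<and>
     {f\<in>topspace (Cp X). \<forall>x\<in>G. \<bar>f x - g x\<bar> < 1 / (real m + 1)} \<subseteq> T"
proof -
  let ?C = "{f. continuous_map X euclideanreal f \<and> f \<in> extensional (topspace X)}"
  obtain S where S: "openin (product_topology (\<lambda>_. euclideanreal) (topspace X)) S" and TS: "T = S \<inter> ?C"
    using T unfolding Cp_def openin_subtopology by blast
  have "g \<in> S" using g TS by blast
  then obtain U where Uf: "finite {i \<in> topspace X. U i \<noteq> UNIV}"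
      and Uo: "\<forall>i\<in>topspace X. open (U i)" and gU: "g \<in> Pi\<^sub>E (topspace X) U"
      and US: "Pi\<^sub>E (topspace X) U \<subseteq> S"
    using S unfolding openin_product_topology_alt by auto
  define G where "G = {i \<in> topspace X. U i \<noteq> UNIV}"
  have "\<forall>i\<in>G. \<exists>m::nat. \<forall>t. \<bar>t - g i\<bar> < 1 / (real m + 1) \<longrightarrow> t \<in> U i"
  proof
    fix i assume i: "i \<in> G"
    then have "open (U i)" "g i \<in> U i" using Uo gU G_def by (auto simp: PiE_def)
    then obtain d where d: "d > 0" "\<forall>t. dist t (g i) < d \<longrightarrow> t \<in> U i"
      by (meson open_dist)
    obtain m :: nat where "inverse (real (Suc m)) < d" using d(1) reals_Archimedean by blast
    then have m: "1 / (real m + 1) < d" by (simp add: inverse_eq_divide add.commute)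
    show "\<exists>m::nat. \<forall>t. \<bar>t - g i\<bar> < 1 / (real m + 1) \<longrightarrow> t \<in> U i"
    proof (intro exI[of _ m] allI impI)
      fix t assume "\<bar>t - g i\<bar> < 1 / (real m + 1)"
      then have "dist t (g i) < d" using m by (simp add: dist_real_def)
      then show "t \<in> U i" using d(2) by blast
    qed
  qed
  from bchoice[OF this] obtain mm where mm: "\<forall>i\<in>G. \<forall>t. \<bar>t - g i\<bar> < 1 / (real (mm i) + 1) \<longrightarrow> t \<in> U i"
    by (elim exE) simp
  define m where "m = Max (insert 0 (mm ` G))"
  have fG: "finite G" using Uf G_def by simp
  have mle: "mm i \<le> m" if "i \<in> G" for i using that fG m_def by auto
  have sub: "{f\<in>topspace (Cp X). \<forall>x\<in>G. \<bar>f x - g x\<bar> < 1 / (real m + 1)} \<subseteq> T"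
  proof
    fix f assume f: "f \<in> {f\<in>topspace (Cp X). \<forall>x\<in>G. \<bar>f x - g x\<bar> < 1 / (real m + 1)}"
    have "f i \<in> U i" if i: "i \<in> topspace X" for i
    proof (cases "i \<in> G")
      case True
      have "1 / (real m + 1) \<le> 1 / (real (mm i) + 1)"
        using mle[OF True] by (simp add: frac_le)
      moreover have "\<bar>f i - g i\<bar> < 1 / (real m + 1)" using f True by simp
      ultimately have "\<bar>f i - g i\<bar> < 1 / (real (mm i) + 1)" by linarith
      then show ?thesis using True mm by blast
    next
      case False then show ?thesis using i G_def by auto
    qed
    moreover have "f \<in> extensional (topspace X)" using f by (simp add: topspace_Cp)
    ultimately have "f \<in> Pi\<^sub>E (topspace X) U" by (simp add: PiE_def Pi_def)
    then have "f \<in> S" using US by blast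
    moreover have "f \<in> ?C" using f by (simp add: topspace_Cp)
    ultimately show "f \<in> T" by (simp add: TS)
  qed
  have "G \<subseteq> topspace X" by (simp add: G_def)
  with fG sub show ?thesis by blast
qed

lemma filter_enumerate:
  fixes J :: "nat set"
  assumes inf: "infinite J"
  shows "filter (\<lambda>j. j \<in> J) [0..<enumerate J r] = map (enumerate J) [0..<r]"
proof (rule sorted_distinct_set_unique)
  have sm: "strict_mono (enumerate J)" using inf by (simp add: strict_mono_enumerate)
  show "sorted (filter (\<lambda>j. j \<in> J) [0..<enumerate J r])" by (rule sorted_wrt_filter) simp
  show "distinct (filter (\<lambda>j. j \<in> J) [0..<enumerate J r])" by simp
  show "sorted (map (enumerate J) [0..<r])"
    using sm by (simp add: sorted_iff_nth_mono strict_mono_less_eq)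
  show "distinct (map (enumerate J) [0..<r])"
    using sm strict_mono_imp_inj_on by (simp add: distinct_map inj_on_subset)
  show "set (filter (\<lambda>j. j \<in> J) [0..<enumerate J r]) = set (map (enumerate J) [0..<r])"
  proof -
    have "j \<in> J \<and> j < enumerate J r \<longleftrightarrow> (\<exists>n<r. j = enumerate J n)" for j
    proof
      assume "j \<in> J \<and> j < enumerate J r"
      then obtain n where n: "enumerate J n = j" using enumerate_Ex inf by blast
      then have "n < r" using \<open>j \<in> J \<and> j < enumerate J r\<close> sm strict_mono_less by blast
      then show "\<exists>n<r. j = enumerate J n" using n by blast
    next
      assume "\<exists>n<r. j = enumerate J n"
      then show "j \<in> J \<and> j < enumerate J r" using sm inf enumerate_in_set strict_mono_less by blast
    qed
    then have e: "{j. j \<in> J \<and> j < enumerate J r} = {j. \<exists>n<r. j = enumerate J n}" by blast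
    have "set (filter (\<lambda>j. j \<in> J) [0..<enumerate J r]) = {j. j \<in> J \<and> j < enumerate J r}" by auto
    moreover have "set (map (enumerate J) [0..<r]) = {j. \<exists>n<r. j = enumerate J n}" by auto
    ultimately show ?thesis using e by simp
  qed
qed

lemma abstract_tree:
  fixes \<rho> :: "'x set list \<Rightarrow> 'x" and Vf :: "'l \<Rightarrow> 'x set" and gs :: "'x list"
  assumes run: "\<And>W a. (\<And>r. W r \<in> range Vf) \<Longrightarrow> (\<And>r. \<rho> (map W [0..<r]) \<in> W r) \<Longrightarrow> a \<in> set gs \<Longrightarrow> \<exists>r. a \<in> W r"
  and step: "\<And>L. length L = length gs \<Longrightarrow>
        \<exists>l. (\<forall>lst\<in>set L. \<rho> (map Vf lst) \<in> Vf l) \<and> (\<exists>a\<in>set gs. a \<notin> Vf l)"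
  shows False
proof -
  define k where "k = length gs"
  define nxt where "nxt L = (SOME l. (\<forall>lst\<in>set L. \<rho> (map Vf lst) \<in> Vf l) \<and> (\<exists>a\<in>set gs. a \<notin> Vf l))" for L
  define adv where "adv L l = map (\<lambda>i. if gs!i \<notin> Vf l then L!i @ [l] else L!i) [0..<k]" for L l
  define Ls where "Ls = rec_nat (replicate k []) (\<lambda>_ L. adv L (nxt L))"
  define lab where "lab j = nxt (Ls j)" for j
  have Ls0: "Ls 0 = replicate k []" and LsS: "Ls (Suc j) = adv (Ls j) (lab j)" for j
    by (simp_all add: Ls_def lab_def)
  have len: "length (Ls j) = k" for j
    by (cases j) (simp_all add: Ls0 LsS adv_def)
  have nx: "(\<forall>lst\<in>set (Ls j). \<rho> (map Vf lst) \<in> Vf (lab j)) \<and> (\<exists>a\<in>set gs. a \<notin> Vf (lab j))" for j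
    unfolding lab_def nxt_def by (rule someI_ex, rule step) (simp add: len k_def)
  have "\<exists>i<k. infinite {j. gs!i \<notin> Vf (lab j)}"
  proof (rule ccontr)
    assume "\<not> ?thesis"
    then have "finite (\<Union>i<k. {j. gs!i \<notin> Vf (lab j)})" by auto
    moreover have "(\<Union>i<k. {j. gs!i \<notin> Vf (lab j)}) = UNIV"
    proof -
      have "\<exists>i<k. gs!i \<notin> Vf (lab j)" for j
        using nx[of j] by (metis in_set_conv_nth k_def)
      then show ?thesis by auto
    qed
    ultimately show False by simp
  qed
  then obtain i where ik: "i < k" and infJ: "infinite {j. gs!i \<notin> Vf (lab j)}" by blast
  define J where "J = {j. gs!i \<notin> Vf (lab j)}"
  have Lsi: "Ls j ! i = map lab (filter (\<lambda>j. j \<in> J) [0..<j])" for j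
  proof (induction j)
    case 0 then show ?case using ik by (simp add: Ls0)
  next
    case (Suc j) then show ?case using ik by (simp add: LsS adv_def J_def)
  qed
  define W where "W r = Vf (lab (enumerate J r))" for r
  have "\<exists>r. gs!i \<in> W r"
  proof (rule run)
    show "W r \<in> range Vf" for r by (simp add: W_def)
    show "\<rho> (map W [0..<r]) \<in> W r" for r
    proof -
      have "map W [0..<r] = map Vf (Ls (enumerate J r) ! i)"
        using filter_enumerate[of J r] infJ by (simp add: Lsi W_def J_def)
      moreover have "Ls (enumerate J r) ! i \<in> set (Ls (enumerate J r))"
        using ik len by simp
      ultimately show ?thesis using nx W_def by metis
    qed
    show "gs!i \<in> set gs" using ik k_def by simp
  qed
  then obtain r where "gs!i \<in> W r" by blast
  moreover have "enumerate J r \<in> J" using infJ J_def enumerate_in_set by blast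
  ultimately show False by (simp add: W_def J_def)
qed

primrec posf :: "('x list \<Rightarrow> 'y \<Rightarrow> 'x) \<Rightarrow> 'x list \<Rightarrow> 'y list \<Rightarrow> 'x list" where
  "posf c s [] = s"
| "posf c s (V # t) = posf c (s @ [c s V]) t"

lemma posf_snoc: "posf c s (t @ [V]) = posf c s t @ [c (posf c s t) V]"
  by (induction t arbitrary: s) auto

lemma galvin:
  fixes X :: "'a topology"
  assumes "II_wins_G1 (open_covers X) (open_covers X)"
  shows "\<exists>\<rho>. (\<forall>t. \<rho> t \<in> topspace X) \<and>
     (\<forall>W. (\<forall>r. openin X (W r) \<and> \<rho> (map W [0..<r]) \<in> W r) \<longrightarrow> \<Union>(range W) = topspace X)"
proof -
  let ?oc = "open_covers X"
  obtain \<sigma> :: "'a set set list \<Rightarrow> 'a set" where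
    \<sigma>: "\<And>F. (\<forall>n. F n \<in> ?oc) \<Longrightarrow> (\<forall>n. \<sigma> (map F [0..<Suc n]) \<in> F n) \<and> range (\<lambda>n. \<sigma> (map F [0..<Suc n])) \<in> ?oc"
    using assms unfolding II_wins_G1_def by blast
  have ne: "topspace X \<noteq> {}"
  proof
    assume e: "topspace X = {}"
    have "{} \<in> ?oc" using e by (simp add: open_covers_def)
    then have "\<forall>n. (\<lambda>_. {}) n \<in> ?oc" by simp
    from \<sigma>[OF this] show False by simp
  qed
  have K: "\<exists>x\<in>topspace X. \<forall>V. openin X V \<and> x \<in> V \<longrightarrow> (\<exists>U\<in>?oc. \<sigma> (s @ [U]) = V)"
    if s: "set s \<subseteq> ?oc" for s
  proof (rule ccontr)
    assume nt: "\<not> ?thesis"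
    have "\<forall>x\<in>topspace X. \<exists>V. openin X V \<and> x \<in> V \<and> (\<forall>U\<in>?oc. \<sigma> (s @ [U]) \<noteq> V)"
    proof
      fix x assume x: "x \<in> topspace X"
      have "\<not> (\<forall>V. openin X V \<and> x \<in> V \<longrightarrow> (\<exists>U\<in>?oc. \<sigma> (s @ [U]) = V))"
        using x nt by blast
      then show "\<exists>V. openin X V \<and> x \<in> V \<and> (\<forall>U\<in>?oc. \<sigma> (s @ [U]) \<noteq> V)" by auto
    qed
    from bchoice[OF this] obtain Vx where Vx0: "\<forall>x\<in>topspace X. openin X (Vx x) \<and> x \<in> Vx x \<and> (\<forall>U\<in>?oc. \<sigma> (s @ [U]) \<noteq> Vx x)"
      by (elim exE) simp
    then have Vx: "\<And>x. x \<in> topspace X \<Longrightarrow> openin X (Vx x) \<and> x \<in> Vx x \<and> (\<forall>U\<in>?oc. \<sigma> (s @ [U]) \<noteq> Vx x)"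
      by blast
    define \<U> where "\<U> = Vx ` topspace X"
    have U: "\<U> \<in> ?oc"
    proof -
      have "\<Union>\<U> \<subseteq> topspace X" using Vx openin_subset unfolding \<U>_def by blast
      moreover have "topspace X \<subseteq> \<Union>\<U>" using Vx unfolding \<U>_def by blast
      ultimately show ?thesis unfolding open_covers_def \<U>_def using Vx by auto
    qed
    define F where "F n = (if n < length s then s!n else \<U>)" for n
    have Fo: "\<forall>n. F n \<in> ?oc" using s U by (auto simp: F_def)
    have "map F [0..<Suc (length s)] = s @ [\<U>]"
      by (rule nth_equalityI) (auto simp: F_def nth_append)
    moreover have "\<sigma> (map F [0..<Suc (length s)]) \<in> F (length s)" using \<sigma>[OF Fo] by blast
    ultimately have "\<sigma> (s @ [\<U>]) \<in> \<U>" by (simp add: F_def)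
    then show False using Vx U \<U>_def by blast
  qed
  define xpt where "xpt s = (SOME x. x \<in> topspace X \<and> (set s \<subseteq> ?oc \<longrightarrow> (\<forall>V. openin X V \<and> x \<in> V \<longrightarrow> (\<exists>U\<in>?oc. \<sigma> (s @ [U]) = V))))" for s
  have xpt: "xpt s \<in> topspace X \<and> (set s \<subseteq> ?oc \<longrightarrow> (\<forall>V. openin X V \<and> xpt s \<in> V \<longrightarrow> (\<exists>U\<in>?oc. \<sigma> (s @ [U]) = V)))" for s
    unfolding xpt_def
  proof (rule someI_ex)
    show "\<exists>x. x \<in> topspace X \<and> (set s \<subseteq> ?oc \<longrightarrow> (\<forall>V. openin X V \<and> x \<in> V \<longrightarrow> (\<exists>U\<in>?oc. \<sigma> (s @ [U]) = V)))"
    proof (cases "set s \<subseteq> ?oc")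
      case True
      then obtain x where "x \<in> topspace X" "\<forall>V. openin X V \<and> x \<in> V \<longrightarrow> (\<exists>U\<in>?oc. \<sigma> (s @ [U]) = V)"
        using K by blast
      then show ?thesis by blast
    next
      case False
      then show ?thesis using ne by blast
    qed
  qed
  define cov where "cov s V = (SOME U. U \<in> ?oc \<and> \<sigma> (s @ [U]) = V)" for s V
  define \<rho> where "\<rho> t = xpt (posf cov [] t)" for t
  have "\<Union>(range W) = topspace X" if W: "\<forall>r. openin X (W r) \<and> \<rho> (map W [0..<r]) \<in> W r" for W
  proof -
    define P where "P r = posf cov [] (map W [0..<r])" for r
    define Fp where "Fp r = cov (P r) (W r)" for r
    have w: "openin X (W r) \<and> xpt (P r) \<in> W r" for r using W by (simp add: \<rho>_def P_def)
    have PS: "P (Suc r) = P r @ [Fp r]" for r by (simp add: P_def Fp_def posf_snoc)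
    have inv: "set (P r) \<subseteq> ?oc \<and> map Fp [0..<r] = P r \<and> Fp r \<in> ?oc \<and> \<sigma> (P r @ [Fp r]) = W r" for r
    proof (induction r)
      case 0
      have "set (P 0) \<subseteq> ?oc" by (simp add: P_def)
      moreover have "\<exists>U\<in>?oc. \<sigma> (P 0 @ [U]) = W 0"
        using xpt[of "P 0"] w[of 0] calculation by blast
      then have "Fp 0 \<in> ?oc \<and> \<sigma> (P 0 @ [Fp 0]) = W 0"
        unfolding Fp_def cov_def by (rule someI2_bex) auto
      ultimately show ?case by (simp add: P_def)
    next
      case (Suc r)
      have s1: "set (P (Suc r)) \<subseteq> ?oc" using Suc PS by simp
      have m1: "map Fp [0..<Suc r] = P (Suc r)" using Suc PS by simp
      have "\<exists>U\<in>?oc. \<sigma> (P (Suc r) @ [U]) = W (Suc r)"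
        using xpt[of "P (Suc r)"] w[of "Suc r"] s1 by blast
      then have "Fp (Suc r) \<in> ?oc \<and> \<sigma> (P (Suc r) @ [Fp (Suc r)]) = W (Suc r)"
        unfolding Fp_def cov_def by (rule someI2_bex) auto
      then show ?case using s1 m1 by simp
    qed
    have Fo: "\<forall>n. Fp n \<in> ?oc" using inv by blast
    have "\<sigma> (map Fp [0..<Suc n]) = W n" for n
      using inv[of n] by simp
    then have "range W \<in> ?oc" using \<sigma>[OF Fo] by simp
    then show ?thesis by (simp add: open_covers_def)
  qed
  moreover have "\<forall>t. \<rho> t \<in> topspace X" using xpt by (simp add: \<rho>_def)
  ultimately show ?thesis by blast
qed

lemma zero_fun_Cp: "zero_fun X \<in> topspace (Cp X)"
proof -
  have "continuous_map X euclideanreal (zero_fun X)"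
    by (rule continuous_map_eq[OF continuous_map_const[THEN iffD2, of _ 0]]) (auto simp: zero_fun_def)
  then show ?thesis by (simp add: topspace_Cp zero_fun_def)
qed

lemma V_open:
  assumes "f \<in> topspace (Cp X)" "g \<in> topspace (Cp X)"
  shows "openin X {x\<in>topspace X. \<bar>f x - g x\<bar> < e}"
proof -
  have "continuous_map X euclideanreal (\<lambda>x. \<bar>f x - g x\<bar>)"
    using assms by (intro continuous_intros) (auto simp: topspace_Cp)
  from openin_continuous_map_preimage[OF this, of "{..<e}"]
  show ?thesis by simp
qed

lemma ex_close:
  assumes "g \<in> Cp X closure_of A" "finite P" "e > 0"
  shows "\<exists>f\<in>A. \<forall>x\<in>P. \<bar>f x - g x\<bar> < e"
proof -
  define N where "N = {f\<in>topspace (Cp X). \<forall>x\<in>P. \<bar>f x - g x\<bar> < e}"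
  have g: "g \<in> topspace (Cp X)" using assms(1) by (simp add: in_closure_of)
  have o: "openin (Cp X) N" unfolding N_def
    by (rule Cp_nbhd_open[OF g assms(2,3)])
  have gN: "g \<in> N" using g assms(3) by (simp add: N_def)
  have all: "\<forall>T. g \<in> T \<and> openin (Cp X) T \<longrightarrow> (\<exists>y. y \<in> A \<and> y \<in> T)"
    using assms(1) by (simp add: in_closure_of)
  obtain y where "y \<in> A" "y \<in> N" using all[rule_format, OF conjI[OF gN o]] by (elim exE conjE)
  then show ?thesis unfolding N_def by blast
qed

lemma task_inf:
  fixes T :: "'t::countable"
  shows "\<exists>n\<ge>N. from_nat (fst (prod_decode n)) = T"
proof (rule exI[of _ "prod_encode (to_nat T, N)"], rule conjI)
  show "N \<le> prod_encode (to_nat T, N)" by (rule le_prod_encode_2)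
  show "from_nat (fst (prod_decode (prod_encode (to_nat T, N)))) = T"
    by (simp only: prod_encode_inverse fst_conv from_nat_to_nat)
qed

lemma part1:
  fixes X :: "'a topology" and \<rho> :: "'a set list \<Rightarrow> 'a"
  assumes \<rho>top: "\<forall>t. \<rho> t \<in> topspace X"
    and run: "\<forall>W. (\<forall>r. openin X (W r) \<and> \<rho> (map W [0..<r]) \<in> W r) \<longrightarrow> \<Union>(range W) = topspace X"
  shows "II_wins_G1 (Omega_o X) (Omega_o X)"
proof -
  define g where "g = zero_fun X"
  have gC: "g \<in> topspace (Cp X)" by (simp add: g_def zero_fun_Cp)
  define task :: "nat \<Rightarrow> nat list list \<times> nat" where "task n = from_nat (fst (prod_decode n))" for n
  define Vh where "Vh hs j = {x\<in>topspace X. \<bar>(hs!j) x - g x\<bar> < 1 / (real (snd (task j)) + 1)}"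
    for hs :: "('a\<Rightarrow>real) list" and j
  define Pts where "Pts hs = (\<lambda>l. \<rho> (map (Vh hs) l)) ` set (fst (task (length hs)))" for hs
  define ch where "ch A hs = (SOME f. f \<in> A \<and> (\<forall>x\<in>Pts hs. \<bar>f x - g x\<bar> < 1 / (real (snd (task (length hs))) + 1)))"
    for A hs
  define hist where "hist As = foldl (\<lambda>hs A. hs @ [ch A hs]) [] As" for As
  define \<sigma>' where "\<sigma>' As = last (hist As)" for As
  show ?thesis
    unfolding II_wins_G1_def
  proof (intro exI[of _ \<sigma>'] allI impI)
    fix F :: "nat \<Rightarrow> ('a \<Rightarrow> real) set"
    assume FO: "\<forall>n. F n \<in> Omega_o X"
    define H where "H n = hist (map F [0..<n])" for n
    define c where "c n = ch (F n) (H n)" for n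
    have HS: "H (Suc n) = H n @ [c n]" for n by (simp add: H_def hist_def c_def)
    have Hc: "H n = map c [0..<n]" for n by (induction n) (simp_all add: HS, simp add: H_def hist_def)
    have lenH: "length (H n) = n" for n by (simp add: Hc)
    have \<sigma>c: "\<sigma>' (map F [0..<Suc n]) = c n" for n
      using HS[of n] unfolding H_def \<sigma>'_def by simp
    have cF: "c n \<in> F n \<and> (\<forall>x\<in>Pts (H n). \<bar>c n x - g x\<bar> < 1 / (real (snd (task n)) + 1))" for n
    proof -
      have "F n \<in> Omega_o X" using FO by blast
      then have cl: "g \<in> Cp X closure_of F n" by (simp add: Omega_o_def g_def)
      have fin: "finite (Pts (H n))" by (simp add: Pts_def)
      have pos: "(0::real) < 1 / (real (snd (task n)) + 1)" by simp
      have "\<exists>f\<in>F n. \<forall>x\<in>Pts (H n). \<bar>f x - g x\<bar> < 1 / (real (snd (task n)) + 1)"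
        using ex_close[OF cl fin pos] .
      then show ?thesis unfolding c_def ch_def lenH by (rule someI2_bex) blast
    qed
    have cC: "c n \<in> topspace (Cp X)" for n
    proof -
      have "F n \<in> Omega_o X" using FO by blast
      then have "F n \<subseteq> topspace (Cp X)" by (simp add: Omega_o_def)
      then show ?thesis using cF[of n] by blast
    qed
    show "(\<forall>n. \<sigma>' (map F [0..<Suc n]) \<in> F n) \<and> range (\<lambda>n. \<sigma>' (map F [0..<Suc n])) \<in> Omega_o X"
    proof (intro conjI allI)
      show "\<sigma>' (map F [0..<Suc n]) \<in> F n" for n using cF \<sigma>c by simp
      have rng: "range (\<lambda>n. \<sigma>' (map F [0..<Suc n])) = range c" using \<sigma>c by simp
      have "g \<in> Cp X closure_of range c"
        unfolding in_closure_of
      proof (intro conjI allI impI gC)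
        fix T assume T: "g \<in> T \<and> openin (Cp X) T"
        show "\<exists>y. y \<in> range c \<and> y \<in> T"
        proof (rule ccontr)
          assume nT: "\<not> (\<exists>y. y \<in> range c \<and> y \<in> T)"
          obtain G m where G: "finite G" "G \<subseteq> topspace X"
            "{f\<in>topspace (Cp X). \<forall>x\<in>G. \<bar>f x - g x\<bar> < 1 / (real m + 1)} \<subseteq> T"
            using Cp_nbhd_basis[of X T g] T by blast
          obtain gs where gs: "set gs = G" using finite_list[OF G(1)] by blast
          define Vf where "Vf j = {x\<in>topspace X. \<bar>c j x - g x\<bar> < 1 / (real (snd (task j)) + 1)}" for j
          show False
          proof (rule abstract_tree[of Vf \<rho> gs])
            fix W :: "nat \<Rightarrow> 'a set" and a
            assume W1: "\<And>r. W r \<in> range Vf" and W2: "\<And>r. \<rho> (map W [0..<r]) \<in> W r" and a: "a \<in> set gs"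
            have "openin X (W r)" for r
            proof -
              obtain j where "W r = Vf j" using W1[of r] by blast
              then show ?thesis using V_open[OF cC gC] by (simp add: Vf_def)
            qed
            then have "\<Union>(range W) = topspace X" using run W2 by blast
            then show "\<exists>r. a \<in> W r" using a gs G(2) by blast
          next
            fix L :: "nat list list" assume "length L = length gs"
            obtain N where N: "\<forall>j\<in>set (concat L). j < N"
              using finite_nat_set_iff_bounded[of "set (concat L)"] by blast
            obtain n where n: "n \<ge> N" "task n = (L, m)"
              using task_inf[of N "(L, m)"] unfolding task_def by blast
            have Vhe: "map (Vh (H n)) l = map Vf l" if "l \<in> set L" for l
            proof (rule map_cong[OF refl])
              fix j assume "j \<in> set l"
              then have "j < n" using N n(1) that by fastforce
              then show "Vh (H n) j = Vf j" by (simp add: Vh_def Vf_def Hc)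
            qed
            have P: "Pts (H n) = (\<lambda>l. \<rho> (map Vf l)) ` set L"
              unfolding Pts_def lenH n(2) fst_conv by (rule image_cong[OF refl]) (metis Vhe)
            show "\<exists>l. (\<forall>lst\<in>set L. \<rho> (map Vf lst) \<in> Vf l) \<and> (\<exists>a\<in>set gs. a \<notin> Vf l)"
            proof (intro exI[of _ n] conjI ballI)
              fix lst assume "lst \<in> set L"
              then have "\<rho> (map Vf lst) \<in> Pts (H n)" using P by blast
              then have "\<bar>c n (\<rho> (map Vf lst)) - g (\<rho> (map Vf lst))\<bar> < 1 / (real (snd (task n)) + 1)"
                using cF[of n] by blast
              then show "\<rho> (map Vf lst) \<in> Vf n" using \<rho>top by (simp add: Vf_def)
            next
              have "c n \<notin> T" using nT by blast
              then have "\<not> (\<forall>x\<in>G. \<bar>c n x - g x\<bar> < 1 / (real m + 1))" using G(3) cC by blast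
              then obtain x where "x \<in> G" "\<not> \<bar>c n x - g x\<bar> < 1 / (real m + 1)" by blast
              then show "\<exists>a\<in>set gs. a \<notin> Vf n" using gs n(2) by (intro bexI[of _ x]) (simp_all add: Vf_def)
            qed
          qed
        qed
      qed
      moreover have "range c \<subseteq> topspace (Cp X)" using cC by blast
      moreover have "g \<notin> range c"
      proof
        have gF: "g \<notin> F n" for n using FO by (simp add: Omega_o_def g_def)
        assume "g \<in> range c"
        then obtain n where "g = c n" by blast
        with cF[of n] gF[of n] show False by simp
      qed
      ultimately show "range (\<lambda>n. \<sigma>' (map F [0..<Suc n])) \<in> Omega_o X"
        using rng by (simp add: Omega_o_def g_def)
    qed
  qed
qed

lemma part2:
  fixes X :: "'a topology" and Y :: "'b topology" and \<rho> :: "'a set list \<Rightarrow> 'a"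
  assumes \<rho>top: "\<forall>t. \<rho> t \<in> topspace X"
    and run: "\<forall>W. (\<forall>r. openin X (W r) \<and> \<rho> (map W [0..<r]) \<in> W r) \<longrightarrow> \<Union>(range W) = topspace X"
    and ct: "countably_tight Y"
  shows "countably_tight (prod_topology (Cp X) Y)"
  unfolding countably_tight_def
proof (intro allI impI, elim conjE)
  fix A :: "(('a \<Rightarrow> real) \<times> 'b) set" and p
  assume Asub: "A \<subseteq> topspace (prod_topology (Cp X) Y)" and pcl: "p \<in> prod_topology (Cp X) Y closure_of A"
  obtain g y where p: "p = (g, y)" by (cases p)
  have ptop: "(g, y) \<in> topspace (prod_topology (Cp X) Y)" using pcl p by (simp add: in_closure_of)
  then have gC: "g \<in> topspace (Cp X)" and yY: "y \<in> topspace Y" by auto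
  have pall: "\<forall>T. (g, y) \<in> T \<and> openin (prod_topology (Cp X) Y) T \<longrightarrow> (\<exists>q. q \<in> A \<and> q \<in> T)"
    using pcl p by (simp add: in_closure_of)
  have AC: "fst q \<in> topspace (Cp X)" if "q \<in> A" for q using Asub that by auto
  define Aset where "Aset F e = {z. \<exists>f. (f, z) \<in> A \<and> (\<forall>x\<in>F. \<bar>f x - g x\<bar> < e)}" for F e
  have Acl: "y \<in> Y closure_of Aset F e" if F: "finite F" and e: "e > 0" for F e
    unfolding in_closure_of
  proof (intro conjI allI impI yY, elim conjE)
    fix Ob assume yO: "y \<in> Ob" and oO: "openin Y Ob"
    define N where "N = {f\<in>topspace (Cp X). \<forall>x\<in>F. \<bar>f x - g x\<bar> < e}"
    have oN: "openin (Cp X) N" unfolding N_def by (rule Cp_nbhd_open[OF gC F e])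
    have gN: "g \<in> N" using gC e by (simp add: N_def)
    have "openin (prod_topology (Cp X) Y) (N \<times> Ob)" using oN oO by (simp add: openin_prod_Times_iff)
    moreover have "(g, y) \<in> N \<times> Ob" using gN yO by simp
    ultimately have "\<exists>q. q \<in> A \<and> q \<in> N \<times> Ob" using pall[rule_format, of "N \<times> Ob"] by simp
    then obtain f z where fz: "(f, z) \<in> A" "f \<in> N" "z \<in> Ob" by (auto simp del: mem_Sigma_iff simp: mem_Times_iff)
    then have "z \<in> Aset F e" unfolding Aset_def N_def by blast
    with fz(3) show "\<exists>z. z \<in> Aset F e \<and> z \<in> Ob" by blast
  qed
  have AsetY: "Aset F e \<subseteq> topspace Y" for F e using Asub unfolding Aset_def by auto
  have exC: "\<exists>C. C \<subseteq> Aset F e \<and> countable C \<and> y \<in> Y closure_of C" if "finite F" "e > 0" for F e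
    using ct[unfolded countably_tight_def, rule_format, of "Aset F e" y] AsetY Acl[OF that] by blast
  define Cs where "Cs F e = (SOME C. C \<subseteq> Aset F e \<and> countable C \<and> y \<in> Y closure_of C)" for F e
  have Cs: "Cs F e \<subseteq> Aset F e \<and> countable (Cs F e) \<and> y \<in> Y closure_of Cs F e" if "finite F" "e > 0" for F e
    unfolding Cs_def by (rule someI_ex, rule exC[OF that])
  have Csne: "Cs F e \<noteq> {}" if "finite F" "e > 0" for F e
    using Cs[OF that] by auto
  define fz where "fz F e z = (SOME f. (f, z) \<in> A \<and> (\<forall>x\<in>F. \<bar>f x - g x\<bar> < e))" for F e z
  have fz: "(fz F e z, z) \<in> A \<and> (\<forall>x\<in>F. \<bar>fz F e z x - g x\<bar> < e)" if "z \<in> Aset F e" for F e z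
  proof -
    have ex: "\<exists>f. (f, z) \<in> A \<and> (\<forall>x\<in>F. \<bar>f x - g x\<bar> < e)" using that by (simp add: Aset_def)
    show ?thesis unfolding fz_def
      by (rule someI_ex[of "\<lambda>f. (f, z) \<in> A \<and> (\<forall>x\<in>F. \<bar>f x - g x\<bar> < e)", OF ex])
  qed
  define en where "en F e i = (fz F e (from_nat_into (Cs F e) i), from_nat_into (Cs F e) i)" for F e i
  define task :: "nat \<Rightarrow> (nat \<times> nat) list list \<times> nat" where "task n = from_nat (fst (prod_decode n))" for n
  define Vh where "Vh ds ji = {x\<in>topspace X. \<bar>fst ((ds ! fst ji) (snd ji)) x - g x\<bar> < 1 / (real (snd (task (fst ji))) + 1)}"
    for ds :: "(nat \<Rightarrow> ('a \<Rightarrow> real) \<times> 'b) list" and ji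
  define Pts where "Pts ds = (\<lambda>l. \<rho> (map (Vh ds) l)) ` set (fst (task (length ds)))" for ds
  define mk where "mk ds = en (Pts ds) (1 / (real (snd (task (length ds))) + 1))" for ds
  define Dl where "Dl = rec_nat [] (\<lambda>_ ds. ds @ [mk ds])"
  define Dn where "Dn n = mk (Dl n)" for n
  have DlS: "Dl (Suc n) = Dl n @ [Dn n]" for n by (simp add: Dl_def Dn_def)
  have Dlm: "Dl n = map Dn [0..<n]" for n
    by (induction n) (simp_all add: DlS, simp add: Dl_def)
  have lenD: "length (Dl n) = n" for n by (simp add: Dlm)
  have finP: "finite (Pts ds)" for ds by (simp add: Pts_def)
  have posm: "(0::real) < 1 / (real k + 1)" for k by simp
  define en_n where "en_n n = en (Pts (Dl n)) (1 / (real (snd (task n)) + 1))" for n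
  have Dn_en: "Dn n = en_n n" for n by (simp add: Dn_def mk_def en_n_def lenD)
  have DnA: "Dn n i \<in> A \<and> (\<forall>x\<in>Pts (Dl n). \<bar>fst (Dn n i) x - g x\<bar> < 1 / (real (snd (task n)) + 1))" for n i
  proof -
    let ?F = "Pts (Dl n)" and ?e = "1 / (real (snd (task n)) + 1)"
    have "from_nat_into (Cs ?F ?e) i \<in> Cs ?F ?e" by (rule from_nat_into[OF Csne[OF finP posm]])
    then have "from_nat_into (Cs ?F ?e) i \<in> Aset ?F ?e" using Cs[OF finP posm] by blast
    from fz[OF this] show ?thesis by (simp add: Dn_en en_n_def en_def)
  qed
  define B where "B = (\<lambda>(n, i). Dn n i) ` UNIV"
  have Bc: "countable B" unfolding B_def by simp
  have BA: "B \<subseteq> A"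
  proof
    fix q assume "q \<in> B"
    then obtain n i where "q = Dn n i" unfolding B_def by auto
    then show "q \<in> A" using DnA[of n i] by simp
  qed
  have closeB: "\<forall>W. (g, y) \<in> W \<and> openin (prod_topology (Cp X) Y) W \<longrightarrow> (\<exists>q. q \<in> B \<and> q \<in> W)"
  proof (intro allI impI)
    fix W assume gyWo: "(g, y) \<in> W \<and> openin (prod_topology (Cp X) Y) W"
    have gyW: "(g, y) \<in> W" and oW: "openin (prod_topology (Cp X) Y) W" using gyWo by auto
    show "\<exists>q. q \<in> B \<and> q \<in> W"
    proof (rule ccontr)
      assume nW: "\<not> (\<exists>q. q \<in> B \<and> q \<in> W)"
      obtain T Ob where oT: "openin (Cp X) T" and oO: "openin Y Ob" and gT: "g \<in> T" and yO: "y \<in> Ob"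
        and TOW: "T \<times> Ob \<subseteq> W"
      proof -
        have "\<forall>x y. (x, y) \<in> W \<longrightarrow> (\<exists>U V. openin (Cp X) U \<and> openin Y V \<and> x \<in> U \<and> y \<in> V \<and> U \<times> V \<subseteq> W)"
          using oW by (simp only: openin_prod_topology_alt)
        from this[rule_format, OF gyW] show ?thesis by (elim exE conjE) (rule that)
      qed
      obtain G m where G: "finite G" "G \<subseteq> topspace X"
        "{f\<in>topspace (Cp X). \<forall>x\<in>G. \<bar>f x - g x\<bar> < 1 / (real m + 1)} \<subseteq> T"
        using Cp_nbhd_basis[OF oT gT] by blast
      obtain gs where gs: "set gs = G" using finite_list[OF G(1)] by blast
      define Vf where "Vf ji = {x\<in>topspace X. \<bar>fst (Dn (fst ji) (snd ji)) x - g x\<bar> < 1 / (real (snd (task (fst ji))) + 1)}" for ji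
      show False
      proof (rule abstract_tree[of Vf \<rho> gs])
        fix W :: "nat \<Rightarrow> 'a set" and a
        assume W1: "\<And>r. W r \<in> range Vf" and W2: "\<And>r. \<rho> (map W [0..<r]) \<in> W r" and a: "a \<in> set gs"
        have "openin X (W r)" for r
        proof -
          obtain ji where "W r = Vf ji" using W1[of r] by blast
          moreover have "fst (Dn (fst ji) (snd ji)) \<in> topspace (Cp X)" using AC DnA by blast
          ultimately show ?thesis using V_open[OF _ gC] by (simp add: Vf_def)
        qed
        then have "\<Union>(range W) = topspace X" using run W2 by blast
        then show "\<exists>r. a \<in> W r" using a gs G(2) by blast
      next
        fix L :: "(nat \<times> nat) list list" assume "length L = length gs"
        obtain N where N: "\<forall>j\<in>fst ` set (concat L). j < N"
          using finite_nat_set_iff_bounded[of "fst ` set (concat L)"] by blast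
        obtain n where n: "n \<ge> N" "task n = (L, m)"
          using task_inf[of N "(L, m)"] unfolding task_def by blast
        have Vhe: "map (Vh (Dl n)) l = map Vf l" if "l \<in> set L" for l
        proof (rule map_cong[OF refl])
          fix ji assume "ji \<in> set l"
          then have "fst ji < n" using N n(1) that by fastforce
          then show "Vh (Dl n) ji = Vf ji" by (simp add: Vh_def Vf_def Dlm)
        qed
        have P: "Pts (Dl n) = (\<lambda>l. \<rho> (map Vf l)) ` set L"
          unfolding Pts_def lenD n(2) fst_conv by (rule image_cong[OF refl]) (metis Vhe)
        let ?F = "Pts (Dl n)" and ?e = "1 / (real (snd (task n)) + 1)"
        have CC: "Cs ?F ?e \<subseteq> Aset ?F ?e \<and> countable (Cs ?F ?e) \<and> y \<in> Y closure_of Cs ?F ?e"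
          by (rule Cs[OF finP posm])
        then have "\<forall>T. y \<in> T \<and> openin Y T \<longrightarrow> (\<exists>z. z \<in> Cs ?F ?e \<and> z \<in> T)"
          by (simp add: in_closure_of)
        then obtain z where zC: "z \<in> Cs ?F ?e" and zO: "z \<in> Ob" using yO oO by blast
        have "z \<in> range (from_nat_into (Cs ?F ?e))"
          using zC CC Csne[OF finP posm] range_from_nat_into by metis
        then obtain i where zi: "z = from_nat_into (Cs ?F ?e) i" by blast
        have Dz: "snd (Dn n i) = z" by (simp add: Dn_en en_n_def en_def zi)
        show "\<exists>l. (\<forall>lst\<in>set L. \<rho> (map Vf lst) \<in> Vf l) \<and> (\<exists>a\<in>set gs. a \<notin> Vf l)"
        proof (intro exI[of _ "(n, i)"] conjI ballI)
          fix lst assume "lst \<in> set L"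
          then have "\<rho> (map Vf lst) \<in> Pts (Dl n)" using P by blast
          then have "\<bar>fst (Dn n i) (\<rho> (map Vf lst)) - g (\<rho> (map Vf lst))\<bar> < 1 / (real (snd (task n)) + 1)"
            using DnA[of n i] by blast
          then show "\<rho> (map Vf lst) \<in> Vf (n, i)" using \<rho>top by (simp add: Vf_def)
        next
          have "Dn n i \<in> B" unfolding B_def by blast
          then have "Dn n i \<notin> W" using nW by blast
          then have "fst (Dn n i) \<notin> T" using TOW zO Dz by (metis mem_Sigma_iff prod.collapse subsetD)
          moreover have "fst (Dn n i) \<in> topspace (Cp X)" using AC DnA by blast
          ultimately have "\<not> (\<forall>x\<in>G. \<bar>fst (Dn n i) x - g x\<bar> < 1 / (real m + 1))" using G(3) by blast
          then obtain x where "x \<in> G" "\<not> \<bar>fst (Dn n i) x - g x\<bar> < 1 / (real m + 1)" by blast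
          then show "\<exists>a\<in>set gs. a \<notin> Vf (n, i)" using gs n(2) by (intro bexI[of _ x]) (simp_all add: Vf_def)
        qed
      qed
    qed
  qed
  have "(g, y) \<in> prod_topology (Cp X) Y closure_of B"
    unfolding in_closure_of using ptop closeB by blast
  then show "\<exists>B\<subseteq>A. countable B \<and> p \<in> prod_topology (Cp X) Y closure_of B"
    using Bc BA p by blast
qed

theorem proposition3p4:
  fixes X :: "'a topology"
  assumes "tychonoff_space X"
      and "II_wins_G1 (open_covers X) (open_covers X)"
  shows "II_wins_G1 (Omega_o X) (Omega_o X) \<and>
         (\<forall>Y :: 'b topology. countably_tight Y \<longrightarrow> countably_tight (prod_topology (Cp X) Y))"
proof -
  obtain \<rho> :: "'a set list \<Rightarrow> 'a" where \<rho>: "\<forall>t. \<rho> t \<in> topspace X"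
    and run: "\<forall>W. (\<forall>r. openin X (W r) \<and> \<rho> (map W [0..<r]) \<in> W r) \<longrightarrow> \<Union>(range W) = topspace X"
    using galvin[OF assms(2)] by (elim exE conjE)
  have 1: "II_wins_G1 (Omega_o X) (Omega_o X)" by (rule part1[OF \<rho> run])
  have 2: "\<forall>Y :: 'b topology. countably_tight Y \<longrightarrow> countably_tight (prod_topology (Cp X) Y)"
    by (intro allI impI) (rule part2[OF \<rho> run])
  show ?thesis using 1 2 by (rule conjI)
qed

end
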